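(* Let $n\ge 4$ and let $A$ be one of the following complex Leibniz algebras with basis $\{h_1,h_2,e_1,\dots,e_n\}$: (a) $R(F_n^1)$: nonzero products $[e_i,e_1]=e_{i+1}$ ($2\le i\le n-1$), $[e_1,h_2]=e_1$, $[h_2,e_1]=-e_1$, $[e_i,h_1]=e_i$ ($2\le i\le n$), $[e_i,h_2]=(i-1)e_i$ ($2\le i\le n$); (b) $\mathcal L_1$: nonzero products $[e_1,e_1]=e_3$, $[e_i,e_1]=e_{i+1}$ ($3\le i\le n-1$), $[e_1,h_2]=e_1$, $[h_2,e_1]=-e_1$, $[e_2,h_1]=e_2$, $[h_1,e_2]=-e_2$, $[e_i,h_2]=(i-1)e_i$ ($3\le i\le n$); (c) $\mathcal L_2$: the same products as $\mathcal L_1$ except $[h_1,e_2]=0$. Then every biderivation of $A$ is inner, i.e. of the form $(-\mathrm{ad}_x,\mathrm{Ad}_x)$ for some $x\in A$.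
   Context: Leibniz algebras are right Leibniz over $\mathbb C$: $[x,[y,z]]=[[x,y],z]-[[x,z],y]$. Unlisted products are zero. A derivation is a linear $d$ with $d([x,y])=[d(x),y]+[x,d(y)]$; an anti-derivation is a linear $D$ with $D([x,y])=[D(x),y]-[D(y),x]$; a biderivation is a pair $(d,D)$ of a derivation and an anti-derivation with $[x,d(y)]=[x,D(y)]$ for all $x,y$. For $x\in A$, $\mathrm{ad}_x(y)=[y,x]$, $\mathrm{Ad}_x(y)=[x,y]$; $(-\mathrm{ad}_x,\mathrm{Ad}_x)$ is called an inner biderivation. *)

theory Defs
  imports Complex_Main
begin

text \<open>Basis labels: H1 = h_1, H2 = h_2, E i = e_i (1 \<le> i \<le> n).
  Elements of the (n+2)-dimensional algebra are coordinate functions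
  basis \<Rightarrow> complex supported on the basis set.\<close>

datatype basis = H1 | H2 | E nat

definition bas :: "nat \<Rightarrow> basis set" where
  "bas n = {H1, H2} \<union> E ` {1..n}"

definition vecs :: "nat \<Rightarrow> (basis \<Rightarrow> complex) set" where
  "vecs n = {v. \<forall>b. b \<notin> bas n \<longrightarrow> v b = 0}"

definition ev :: "basis \<Rightarrow> basis \<Rightarrow> complex" where
  "ev b = (\<lambda>k. if k = b then 1 else 0)"

definition scl :: "complex \<Rightarrow> (basis \<Rightarrow> complex) \<Rightarrow> basis \<Rightarrow> complex" where
  "scl c v = (\<lambda>k. c * v k)"

definition vadd :: "(basis \<Rightarrow> complex) \<Rightarrow> (basis \<Rightarrow> complex) \<Rightarrow> basis \<Rightarrow> complex" where
  "vadd u v = (\<lambda>k. u k + v k)"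

definition vsub :: "(basis \<Rightarrow> complex) \<Rightarrow> (basis \<Rightarrow> complex) \<Rightarrow> basis \<Rightarrow> complex" where
  "vsub u v = (\<lambda>k. u k - v k)"

definition vneg :: "(basis \<Rightarrow> complex) \<Rightarrow> basis \<Rightarrow> complex" where
  "vneg u = (\<lambda>k. - u k)"

text \<open>Structure constants: s a b = [a,b] for basis labels a, b (unlisted products zero).\<close>

definition RF :: "nat \<Rightarrow> basis \<Rightarrow> basis \<Rightarrow> basis \<Rightarrow> complex" where
  "RF n a b = (case a of
     E i \<Rightarrow> (case b of
        E j \<Rightarrow> (if j = 1 \<and> 2 \<le> i \<and> i \<le> n - 1 then ev (E (i + 1)) else (\<lambda>_. 0))
      | H1 \<Rightarrow> (if 2 \<le> i \<and> i \<le> n then ev (E i) else (\<lambda>_. 0))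
      | H2 \<Rightarrow> (if i = 1 then ev (E 1)
               else if 2 \<le> i \<and> i \<le> n then scl (of_nat (i - 1)) (ev (E i))
               else (\<lambda>_. 0)))
   | H2 \<Rightarrow> (case b of E j \<Rightarrow> (if j = 1 then vneg (ev (E 1)) else (\<lambda>_. 0)) | _ \<Rightarrow> (\<lambda>_. 0))
   | H1 \<Rightarrow> (\<lambda>_. 0))"

text \<open>(b),(c): common shape; flag True gives L_1 (with [h_1,e_2] = -e_2),
  False gives L_2 (with [h_1,e_2] = 0).\<close>
definition Lgen :: "bool \<Rightarrow> nat \<Rightarrow> basis \<Rightarrow> basis \<Rightarrow> basis \<Rightarrow> complex" where
  "Lgen flag n a b = (case a of
     E i \<Rightarrow> (case b of
        E j \<Rightarrow> (if j = 1 \<and> i = 1 then ev (E 3)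
                else if j = 1 \<and> 3 \<le> i \<and> i \<le> n - 1 then ev (E (i + 1))
                else (\<lambda>_. 0))
      | H1 \<Rightarrow> (if i = 2 then ev (E 2) else (\<lambda>_. 0))
      | H2 \<Rightarrow> (if i = 1 then ev (E 1)
               else if 3 \<le> i \<and> i \<le> n then scl (of_nat (i - 1)) (ev (E i))
               else (\<lambda>_. 0)))
   | H2 \<Rightarrow> (case b of E j \<Rightarrow> (if j = 1 then vneg (ev (E 1)) else (\<lambda>_. 0)) | _ \<Rightarrow> (\<lambda>_. 0))
   | H1 \<Rightarrow> (case b of E j \<Rightarrow> (if flag \<and> j = 2 then vneg (ev (E 2)) else (\<lambda>_. 0)) | _ \<Rightarrow> (\<lambda>_. 0)))"

definition L1 :: "nat \<Rightarrow> basis \<Rightarrow> basis \<Rightarrow> basis \<Rightarrow> complex" where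
  "L1 n = Lgen True n"

definition L2 :: "nat \<Rightarrow> basis \<Rightarrow> basis \<Rightarrow> basis \<Rightarrow> complex" where
  "L2 n = Lgen False n"

definition br :: "nat \<Rightarrow> (basis \<Rightarrow> basis \<Rightarrow> basis \<Rightarrow> complex)
    \<Rightarrow> (basis \<Rightarrow> complex) \<Rightarrow> (basis \<Rightarrow> complex) \<Rightarrow> basis \<Rightarrow> complex" where
  "br n s x y = (\<lambda>k. \<Sum>a\<in>bas n. \<Sum>b\<in>bas n. x a * y b * s a b k)"

definition lin :: "nat \<Rightarrow> ((basis \<Rightarrow> complex) \<Rightarrow> basis \<Rightarrow> complex) \<Rightarrow> bool" where
  "lin n f \<longleftrightarrow> (\<forall>v\<in>vecs n. f v \<in> vecs n)
     \<and> (\<forall>u\<in>vecs n. \<forall>v\<in>vecs n. f (vadd u v) = vadd (f u) (f v))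
     \<and> (\<forall>c. \<forall>v\<in>vecs n. f (scl c v) = scl c (f v))"

definition is_derivation where
  "is_derivation n s d \<longleftrightarrow> lin n d \<and>
     (\<forall>x\<in>vecs n. \<forall>y\<in>vecs n. d (br n s x y) = vadd (br n s (d x) y) (br n s x (d y)))"

definition is_antiderivation where
  "is_antiderivation n s D \<longleftrightarrow> lin n D \<and>
     (\<forall>x\<in>vecs n. \<forall>y\<in>vecs n. D (br n s x y) = vsub (br n s (D x) y) (br n s (D y) x))"

definition is_biderivation where
  "is_biderivation n s d D \<longleftrightarrow> is_derivation n s d \<and> is_antiderivation n s D \<and>
     (\<forall>x\<in>vecs n. \<forall>y\<in>vecs n. br n s x (d y) = br n s x (D y))"

text \<open>Inner biderivation (-ad_x, Ad_x) with ad_x(y) = [y,x], Ad_x(y) = [x,y].\<close>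
definition is_inner_biderivation where
  "is_inner_biderivation n s d D \<longleftrightarrow> (\<exists>x\<in>vecs n. \<forall>y\<in>vecs n.
     d y = vneg (br n s y x) \<and> D y = br n s x y)"

end

theory Submission
  imports Defs
begin

lemma bas_simps[simp]: "H1 \<in> bas n" "H2 \<in> bas n" "E i \<in> bas n \<longleftrightarrow> 1 \<le> i \<and> i \<le> n"
  by (auto simp: bas_def)

lemma finite_bas[simp]: "finite (bas n)" by (simp add: bas_def)

lemma sum2_ind:
  assumes "finite S" "finite T"
  shows "(\<Sum>a\<in>S. \<Sum>b\<in>T. u a * v b * (if a = A \<and> b = B then c else 0)) =
     (if A \<in> S \<and> B \<in> T then u A * v B * c else (0::complex))"
proof -
  have "(\<Sum>a\<in>S. \<Sum>b\<in>T. u a * v b * (if a = A \<and> b = B then c else 0)) =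
        (\<Sum>a\<in>S. if a = A then (\<Sum>b\<in>T. u a * v b * (if b = B then c else 0)) else 0)"
    by (rule sum.cong) auto
  also have "\<dots> = (if A \<in> S \<and> B \<in> T then u A * v B * c else 0)"
    using assms by (simp add: sum.delta if_distrib[of "\<lambda>x. _ * x"] cong: if_cong)
  finally show ?thesis .
qed

lemma sum2_ind':
  assumes "finite S" "finite T"
  shows "(\<Sum>a\<in>S. \<Sum>b\<in>T. u a * v b * (if a = A \<and> b = B then (if P then c else 0) else 0)) =
     (if A \<in> S \<and> B \<in> T \<and> P then u A * v B * c else (0::complex))"
  using sum2_ind[OF assms, of u v A B "if P then c else 0"] by auto

lemma RF_ind:
  "RF n a b (E j) =
     (if a = E 1 \<and> b = H2 then (if j = 1 then 1 else 0) else 0)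
   - (if a = H2 \<and> b = E 1 then (if j = 1 then 1 else 0) else 0)
   + (if a = E j \<and> b = H1 then (if 2 \<le> j \<and> j \<le> n then 1 else 0) else 0)
   + (if a = E j \<and> b = H2 then (if 2 \<le> j \<and> j \<le> n then of_nat (j - 1) else 0) else 0)
   + (if a = E (j - 1) \<and> b = E 1 then (if 3 \<le> j \<and> j \<le> n then 1 else 0) else 0)"
  by (auto simp: RF_def ev_def scl_def vneg_def split: basis.split)

lemma RF_H[simp]: "RF n a b H1 = 0" "RF n a b H2 = 0"
  by (auto simp: RF_def ev_def scl_def vneg_def split: basis.split)

lemma sum2_split1: "(\<Sum>a\<in>S. \<Sum>b\<in>T. u a * v b * (f a b + g a b::complex)) =
   (\<Sum>a\<in>S. \<Sum>b\<in>T. u a * v b * f a b) + (\<Sum>a\<in>S. \<Sum>b\<in>T. u a * v b * g a b)"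
  by (simp add: distrib_left sum.distrib)
lemma sum2_split2: "(\<Sum>a\<in>S. \<Sum>b\<in>T. u a * v b * (f a b - g a b::complex)) =
   (\<Sum>a\<in>S. \<Sum>b\<in>T. u a * v b * f a b) - (\<Sum>a\<in>S. \<Sum>b\<in>T. u a * v b * g a b)"
  by (simp add: right_diff_distrib sum_subtractf)
lemmas sum2_split = sum2_split1 sum2_split2

lemma brRF:
  "br n (RF n) u v k = (case k of H1 \<Rightarrow> 0 | H2 \<Rightarrow> 0 | E j \<Rightarrow>
     (if j = 1 \<and> 1 \<le> n then u (E 1) * v H2 - u H2 * v (E 1) else 0)
   + (if 2 \<le> j \<and> j \<le> n then u (E j) * (v H1 + of_nat (j - 1) * v H2) else 0)
   + (if 3 \<le> j \<and> j \<le> n then u (E (j - 1)) * v (E 1) else 0))"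
proof (cases k)
  case (E j)
  have "br n (RF n) u v k = (\<Sum>a\<in>bas n. \<Sum>b\<in>bas n. u a * v b * RF n a b (E j))"
    by (simp add: br_def E)
  also have "\<dots> = (if j = 1 \<and> 1 \<le> n then u (E 1) * v H2 - u H2 * v (E 1) else 0)
   + (if 2 \<le> j \<and> j \<le> n then u (E j) * v H1 else 0)
   + (if 2 \<le> j \<and> j \<le> n then u (E j) * v H2 * of_nat (j - 1) else 0)
   + (if 3 \<le> j \<and> j \<le> n then u (E (j - 1)) * v (E 1) else 0)"
  proof -
    have c1: "(E (j - 1) \<in> bas n \<and> E 1 \<in> bas n \<and> 3 \<le> j \<and> j \<le> n) = (3 \<le> j \<and> j \<le> n)"
      "(E j \<in> bas n \<and> 2 \<le> j \<and> j \<le> n) = (2 \<le> j \<and> j \<le> n)"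
      "(E 1 \<in> bas n \<and> j = 1) = (j = 1 \<and> 1 \<le> n)"
      by auto
    show ?thesis
    unfolding RF_ind sum2_split sum2_ind'[OF finite_bas finite_bas] 
    by (cases "j = 1"; cases "j = 2"; cases "3 \<le> j"; cases "j \<le> n") auto
  qed
  finally show ?thesis using E by (simp add: algebra_simps)
qed (simp_all add: br_def)

lemma Lgen_ind:
  "Lgen f n a b (E j) =
     (if a = E 1 \<and> b = H2 then (if j = 1 then 1 else 0) else 0)
   - (if a = H2 \<and> b = E 1 then (if j = 1 then 1 else 0) else 0)
   + (if a = E 2 \<and> b = H1 then (if j = 2 then 1 else 0) else 0)
   - (if a = H1 \<and> b = E 2 then (if j = 2 \<and> f then 1 else 0) else 0)
   + (if a = E 1 \<and> b = E 1 then (if j = 3 then 1 else 0) else 0)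
   + (if a = E j \<and> b = H2 then (if 3 \<le> j \<and> j \<le> n then of_nat (j - 1) else 0) else 0)
   + (if a = E (j - 1) \<and> b = E 1 then (if 4 \<le> j \<and> j \<le> n then 1 else 0) else 0)"
  by (auto simp: Lgen_def ev_def scl_def vneg_def split: basis.split)

lemma Lgen_H[simp]: "Lgen f n a b H1 = 0" "Lgen f n a b H2 = 0"
  by (auto simp: Lgen_def ev_def scl_def vneg_def split: basis.split)


lemma brL:
  assumes "4 \<le> n"
  shows "br n (Lgen f n) u v k = (case k of H1 \<Rightarrow> 0 | H2 \<Rightarrow> 0 | E j \<Rightarrow>
     (if j = 1 then u (E 1) * v H2 - u H2 * v (E 1) else 0)
   + (if j = 2 then u (E 2) * v H1 - (if f then u H1 * v (E 2) else 0) else 0)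
   + (if j = 3 then u (E 1) * v (E 1) else 0)
   + (if 3 \<le> j \<and> j \<le> n then of_nat (j - 1) * u (E j) * v H2 else 0)
   + (if 4 \<le> j \<and> j \<le> n then u (E (j - 1)) * v (E 1) else 0))"
proof (cases k)
  case (E j)
  have "br n (Lgen f n) u v k = (\<Sum>a\<in>bas n. \<Sum>b\<in>bas n. u a * v b * Lgen f n a b (E j))"
    by (simp add: br_def E)
  also have "\<dots> = (if j = 1 then u (E 1) * v H2 - u H2 * v (E 1) else 0)
   + (if j = 2 then u (E 2) * v H1 - (if f then u H1 * v (E 2) else 0) else 0)
   + (if j = 3 then u (E 1) * v (E 1) else 0)
   + (if 3 \<le> j \<and> j \<le> n then of_nat (j - 1) * u (E j) * v H2 else 0)
   + (if 4 \<le> j \<and> j \<le> n then u (E (j - 1)) * v (E 1) else 0)"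
  proof -
    have "j = 0 \<or> j = 1 \<or> j = 2 \<or> j = 3 \<or> (4 \<le> j \<and> j \<le> n) \<or> n < j" by arith
    then show ?thesis
    unfolding Lgen_ind sum2_split sum2_ind'[OF finite_bas finite_bas] using assms
    by (elim disjE) (simp_all add: algebra_simps, arith)
  qed
  finally show ?thesis using E by simp
qed (simp_all add: br_def)


definition zv :: "basis \<Rightarrow> complex" where "zv = (\<lambda>_. 0)"

lemma ev_vecs[simp]: "b \<in> bas n \<Longrightarrow> ev b \<in> vecs n"
  by (auto simp: vecs_def ev_def)

lemma zv_vecs[simp]: "(\<lambda>_. 0) \<in> vecs n"
  by (auto simp: vecs_def)

lemma lin_zero: "lin n f \<Longrightarrow> f (\<lambda>_. 0) = (\<lambda>_. 0)"
proof -
  assume l: "lin n f"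
  have "f (scl 0 (\<lambda>_. 0)) = scl 0 (f (\<lambda>_. 0))"
    using l zv_vecs[of n] unfolding lin_def by blast
  moreover have "scl 0 (\<lambda>_. 0) = (\<lambda>_. 0)" "\<And>w. scl 0 w = (\<lambda>_. 0)" by (auto simp: scl_def)
  ultimately show ?thesis by simp
qed

lemma lin_scl: "lin n f \<Longrightarrow> v \<in> vecs n \<Longrightarrow> f (scl c v) = scl c (f v)"
  unfolding lin_def by (elim conjE) (erule allE, erule bspec)

lemma vneg_scl: "vneg v = scl (-1) v" by (simp add: vneg_def scl_def)

lemma lin_vneg: "lin n f \<Longrightarrow> v \<in> vecs n \<Longrightarrow> f (vneg v) = vneg (f v)"
  by (simp add: vneg_scl lin_scl)

lemma lin_out: "lin n f \<Longrightarrow> v \<in> vecs n \<Longrightarrow> k \<notin> bas n \<Longrightarrow> f v k = 0"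
proof -
  assume "lin n f" "v \<in> vecs n" "k \<notin> bas n"
  then have "f v \<in> vecs n" unfolding lin_def by blast
  then show ?thesis using \<open>k \<notin> bas n\<close> unfolding vecs_def by blast
qed

lemma lin_sum:
  assumes "lin n f" "finite S" "S \<subseteq> bas n"
  shows "f (\<lambda>k. \<Sum>b\<in>S. v b * ev b k) = (\<lambda>k. \<Sum>b\<in>S. v b * f (ev b) k)"
  using assms(2,3)
proof (induction S rule: finite_induct)
  case empty
  then show ?case using lin_zero[OF assms(1)] by simp
next
  case (insert b S)
  have bb: "b \<in> bas n" using insert.prems by blast
  have SS: "S \<subseteq> bas n" using insert.prems by blast
  have IH: "f (\<lambda>k. \<Sum>b\<in>S. v b * ev b k) = (\<lambda>k. \<Sum>b\<in>S. v b * f (ev b) k)"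
    using insert.IH SS by blast
  have vs: "(\<lambda>k. \<Sum>b\<in>S. v b * ev b k) \<in> vecs n"
    unfolding vecs_def
  proof (intro CollectI allI impI)
    fix k assume "k \<notin> bas n"
    then have "\<forall>b\<in>S. ev b k = 0" using SS unfolding ev_def by auto
    then show "(\<Sum>b\<in>S. v b * ev b k) = 0" by simp
  qed
  have e1: "(\<lambda>k. \<Sum>b\<in>insert b S. v b * ev b k) = vadd (scl (v b) (ev b)) (\<lambda>k. \<Sum>b\<in>S. v b * ev b k)"
    unfolding vadd_def scl_def by (rule ext) (simp only: sum.insert[OF insert.hyps(1,2)])
  have sv: "scl (v b) (ev b) \<in> vecs n" using bb unfolding vecs_def scl_def ev_def by auto
  have add: "\<And>u w. u \<in> vecs n \<Longrightarrow> w \<in> vecs n \<Longrightarrow> f (vadd u w) = vadd (f u) (f w)"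
    using assms(1) unfolding lin_def by blast
  have "f (\<lambda>k. \<Sum>b\<in>insert b S. v b * ev b k) = vadd (f (scl (v b) (ev b))) (f (\<lambda>k. \<Sum>b\<in>S. v b * ev b k))"
    unfolding e1 by (rule add[OF sv vs])
  also have "\<dots> = vadd (scl (v b) (f (ev b))) (\<lambda>k. \<Sum>b\<in>S. v b * f (ev b) k)"
    unfolding IH lin_scl[OF assms(1) ev_vecs[OF bb]] ..
  also have "\<dots> = (\<lambda>k. \<Sum>b\<in>insert b S. v b * f (ev b) k)"
    unfolding vadd_def scl_def by (rule ext) (simp only: sum.insert[OF insert.hyps(1,2)])
  finally show ?case .
qed

lemma vec_expand: "v \<in> vecs n \<Longrightarrow> v = (\<lambda>k. \<Sum>b\<in>bas n. v b * ev b k)"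
  by (rule ext) (auto simp: vecs_def ev_def if_distrib[of "\<lambda>x. _ * x"] cong: if_cong)

lemma lin_expand: "lin n f \<Longrightarrow> v \<in> vecs n \<Longrightarrow> f v k = (\<Sum>b\<in>bas n. v b * f (ev b) k)"
  using lin_sum[of n f "bas n" v] vec_expand[of v n] by (metis finite_bas order_refl)

lemma br_ev1: "a \<in> bas n \<Longrightarrow> br n s (ev a) x k = (\<Sum>b\<in>bas n. x b * s a b k)"
proof -
  assume a: "a \<in> bas n"
  have "br n s (ev a) x k = (\<Sum>a'\<in>bas n. if a' = a then (\<Sum>b\<in>bas n. x b * s a b k) else 0)"
    unfolding br_def ev_def by (rule sum.cong) auto
  also have "\<dots> = (\<Sum>b\<in>bas n. x b * s a b k)" using a by simp
  finally show ?thesis .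
qed

lemma br_ev2: "b \<in> bas n \<Longrightarrow> br n s x (ev b) k = (\<Sum>a\<in>bas n. x a * s a b k)"
proof -
  assume b: "b \<in> bas n"
  have "br n s x (ev b) k = (\<Sum>a\<in>bas n. x a * s a b k)"
    unfolding br_def ev_def
  proof (rule sum.cong)
    fix a assume "a \<in> bas n"
    have "(\<Sum>b'\<in>bas n. x a * (if b' = b then 1 else 0) * s a b' k) =
          (\<Sum>b'\<in>bas n. if b' = b then x a * s a b k else 0)"
      by (rule sum.cong) auto
    also have "\<dots> = x a * s a b k" using b by simp
    finally show "(\<Sum>b'\<in>bas n. x a * (if b' = b then 1 else 0) * s a b' k) = x a * s a b k" .
  qed simp
  then show ?thesis .
qed

lemma br_lin1: "br n s y x k = (\<Sum>b\<in>bas n. y b * br n s (ev b) x k)"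
proof -
  have "(\<Sum>b\<in>bas n. y b * br n s (ev b) x k) = (\<Sum>b\<in>bas n. y b * (\<Sum>b'\<in>bas n. x b' * s b b' k))"
    by (rule sum.cong) (simp_all add: br_ev1)
  also have "\<dots> = br n s y x k"
    by (simp add: br_def sum_distrib_left mult.assoc)
  finally show ?thesis by simp
qed

lemma br_lin2: "br n s x y k = (\<Sum>b\<in>bas n. y b * br n s x (ev b) k)"
proof -
  have "(\<Sum>b\<in>bas n. y b * br n s x (ev b) k) = (\<Sum>b\<in>bas n. y b * (\<Sum>a\<in>bas n. x a * s a b k))"
    by (rule sum.cong) (simp_all add: br_ev2)
  also have "\<dots> = (\<Sum>b\<in>bas n. \<Sum>a\<in>bas n. x a * y b * s a b k)"
    by (simp add: sum_distrib_left algebra_simps)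
  also have "\<dots> = br n s x y k"
    unfolding br_def by (rule sum.swap)
  finally show ?thesis by simp
qed

lemma inner_from_basis:
  assumes "lin n d" "lin n D" "x \<in> vecs n"
    and "\<And>b k. b \<in> bas n \<Longrightarrow> d (ev b) k = - br n s (ev b) x k"
    and "\<And>b k. b \<in> bas n \<Longrightarrow> D (ev b) k = br n s x (ev b) k"
  shows "is_inner_biderivation n s d D"
  unfolding is_inner_biderivation_def
proof (intro bexI[OF _ assms(3)] ballI conjI ext)
  fix y k assume y: "y \<in> vecs n"
  show "d y k = vneg (br n s y x) k"
    using lin_expand[OF assms(1) y, of k] br_lin1[of n s y x k] assms(4)
    by (simp add: vneg_def sum_negf[symmetric])
  show "D y k = br n s x y k"
    using lin_expand[OF assms(2) y, of k] br_lin2[of n s x y k] assms(5)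
    by simp
qed


lemma br_evev: "a \<in> bas n \<Longrightarrow> b \<in> bas n \<Longrightarrow> br n s (ev a) (ev b) = s a b"
proof (rule ext)
  fix k assume a: "a \<in> bas n" and b: "b \<in> bas n"
  have "br n s (ev a) (ev b) k = (\<Sum>b'\<in>bas n. if b' = b then s a b k else 0)"
    unfolding br_ev1[OF a] by (rule sum.cong) (auto simp: ev_def)
  also have "\<dots> = s a b k" using b by simp
  finally show "br n s (ev a) (ev b) k = s a b k" .
qed

lemma ev_app[simp]: "ev b k = (if k = b then 1 else 0)" by (simp add: ev_def)
lemma scl_app[simp]: "scl c v k = c * v k" by (simp add: scl_def)
lemma vneg_app[simp]: "vneg v k = - v k" by (simp add: vneg_def)
lemma vadd_app[simp]: "vadd u v k = u k + v k" by (simp add: vadd_def)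
lemma vsub_app[simp]: "vsub u v k = u k - v k" by (simp add: vsub_def)

lemma bider_parts:
  assumes "is_biderivation n s d D"
  shows "lin n d" "lin n D"
    "\<And>a b k. a \<in> bas n \<Longrightarrow> b \<in> bas n \<Longrightarrow> d (s a b) k = br n s (d (ev a)) (ev b) k + br n s (ev a) (d (ev b)) k"
    "\<And>a b k. a \<in> bas n \<Longrightarrow> b \<in> bas n \<Longrightarrow> D (s a b) k = br n s (D (ev a)) (ev b) k - br n s (D (ev b)) (ev a) k"
    "\<And>x y k. x \<in> vecs n \<Longrightarrow> y \<in> vecs n \<Longrightarrow> br n s x (d y) k = br n s x (D y) k"
proof -
  show "lin n d" "lin n D" using assms unfolding is_biderivation_def is_derivation_def is_antiderivation_def by blast+
next
  fix a b k assume a: "a \<in> bas n" and b: "b \<in> bas n"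
  have "d (br n s (ev a) (ev b)) = vadd (br n s (d (ev a)) (ev b)) (br n s (ev a) (d (ev b)))"
    using assms a b unfolding is_biderivation_def is_derivation_def by simp
  then show "d (s a b) k = br n s (d (ev a)) (ev b) k + br n s (ev a) (d (ev b)) k"
    unfolding br_evev[OF a b] by (simp add: vadd_def)
next
  fix a b k assume a: "a \<in> bas n" and b: "b \<in> bas n"
  have "D (br n s (ev a) (ev b)) = vsub (br n s (D (ev a)) (ev b)) (br n s (D (ev b)) (ev a))"
    using assms a b unfolding is_biderivation_def is_antiderivation_def by simp
  then show "D (s a b) k = br n s (D (ev a)) (ev b) k - br n s (D (ev b)) (ev a) k"
    unfolding br_evev[OF a b] by (simp add: vsub_def)
next
  fix x y k assume "x \<in> vecs n" "y \<in> vecs n"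
  then have "br n s x (d y) = br n s x (D y)"
    using assms unfolding is_biderivation_def by blast
  then show "br n s x (d y) k = br n s x (D y) k" by simp
qed


declare ev_app[simp del]

lemma lin2:
  assumes "x + y = 0" "x + 2 * y = (0::complex)"
  shows "x = 0" "y = 0"
proof -
  have "y = (x + 2 * y) - (x + y)" by simp
  then show y: "y = 0" using assms by simp
  then show "x = 0" using assms(1) by simp
qed

lemma lin2':
  assumes "x1 + x2 = y1 + y2" "x1 + 2 * x2 = y1 + 2 * (y2::complex)"
  shows "x1 = y1" "x2 = y2"
proof -
  have "(x1 - y1) + (x2 - y2) = 0" "(x1 - y1) + 2 * (x2 - y2) = 0"
    using assms by (simp_all add: algebra_simps)
  from lin2[OF this] show "x1 = y1" "x2 = y2" by simp_all
qed

lemma RF_main: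
  assumes n4: "4 \<le> n" and bd: "is_biderivation n (RF n) d D"
  shows "is_inner_biderivation n (RF n) d D"
proof -
  note P = bider_parts[OF bd]
  have ld: "lin n d" and lD: "lin n D" by (fact P(1), fact P(2))
  note Der = P(3) and Ant = P(4) and Bi = P(5)
  note S = brRF lin_scl[OF ld] lin_scl[OF lD] lin_zero[OF ld] lin_zero[OF lD]
     lin_vneg[OF ld] lin_vneg[OF lD] RF_def ev_app
  have outd: "\<And>b k. b \<in> bas n \<Longrightarrow> k \<notin> bas n \<Longrightarrow> d (ev b) k = 0"
    using lin_out[OF ld] by simp
  have outD: "\<And>b k. b \<in> bas n \<Longrightarrow> k \<notin> bas n \<Longrightarrow> D (ev b) k = 0"
    using lin_out[OF lD] by simp
  define c where "c = d (ev H2) (E 1)"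
  define a where "a = d (ev (E 1)) (E 1)"
  define g where "g = d (ev (E 2)) (E 2)"
  have h1a: "d (ev H1) H1 + d (ev H1) H2 = 0"
    using Der[of "E 2" H1 "E 2"] n4 by (simp add: S cong: if_cong)
  have h1b: "d (ev H1) H1 + 2 * d (ev H1) H2 = 0"
    using Der[of "E 3" H1 "E 3"] n4 by (simp add: S cong: if_cong)
  have h1c: "d (ev H1) (E 1) = 0"
    using Der[of H1 H2 "E 1"] n4 by (simp add: S cong: if_cong)
  have h1d: "d (ev H1) (E j) = 0" if "2 \<le> j" "j \<le> n" for j
    using Der[of H1 H1 "E j"] n4 that by (simp add: S cong: if_cong)
  have dH1: "d (ev H1) k = 0" for k
  proof (cases k)
    case H1 then show ?thesis using lin2[OF h1a h1b] by simp
  next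
    case H2 then show ?thesis using lin2[OF h1a h1b] by simp
  next
    case (E j)
    then show ?thesis using h1c h1d[of j] outd[of H1 k]
      by (cases "j = 1"; cases "2 \<le> j"; cases "j \<le> n") auto
  qed
  have h2a: "d (ev H2) (E j) = 0" if "2 \<le> j" "j \<le> n" for j
    using Der[of H2 H2 "E j"] n4 that by (simp add: S cong: if_cong)
  have h2b: "d (ev H2) H1 + d (ev H2) H2 = 0"
    using Der[of "E 2" H2 "E 2"] n4 by (simp add: S cong: if_cong)
  have h2c: "d (ev H2) H1 + 2 * d (ev H2) H2 = 0"
    using Der[of "E 3" H2 "E 3"] n4 by (simp add: S cong: if_cong)
  have dH2: "d (ev H2) k = (if k = E 1 then c else 0)" for k
  proof (cases k)
    case H1 then show ?thesis using lin2[OF h2b h2c] by simp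
  next
    case H2 then show ?thesis using lin2[OF h2b h2c] by simp
  next
    case (E j)
    then show ?thesis using h2a[of j] outd[of H2 k] c_def
      by (cases "j = 1"; cases "2 \<le> j"; cases "j \<le> n") auto
  qed
  have e1a: "d (ev (E 1)) H1 = 0" "d (ev (E 1)) H2 = 0"
    using Der[of "E 1" H2 H1] Der[of "E 1" H2 H2] n4 by (simp_all add: S cong: if_cong)
  have e1b: "d (ev (E 1)) (E j) = 0" if "2 \<le> j" "j \<le> n" for j
    using Der[of "E 1" H1 "E j"] n4 that by (simp add: S dH1 cong: if_cong)
  have dE1: "d (ev (E 1)) k = (if k = E 1 then a else 0)" for k
  proof (cases k)
    case (E j)
    then show ?thesis using e1b[of j] outd[of "E 1" k] a_def n4
      by (cases "j = 1"; cases "2 \<le> j"; cases "j \<le> n") auto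
  qed (use e1a in simp_all)
  have eia: "d (ev (E i)) H1 = 0" "d (ev (E i)) H2 = 0" "d (ev (E i)) (E 1) = 0"
    if "2 \<le> i" "i \<le> n" for i
    using Der[of "E i" H1 H1] Der[of "E i" H1 H2] Der[of "E i" H1 "E 1"] n4 that
    by (simp_all add: S dH1 cong: if_cong)
  have eib: "of_nat (i - 1) * d (ev (E i)) (E j) = of_nat (j - 1) * d (ev (E i)) (E j)
      + (if 3 \<le> j \<and> i = j - 1 then c else 0)"
    if "2 \<le> i" "i \<le> n" "2 \<le> j" "j \<le> n" for i j
    using Der[of "E i" H2 "E j"] n4 that by (simp add: S dH2 cong: if_cong)
  have eic: "d (ev (E (i + 1))) (E (i + 1)) = d (ev (E i)) (E i) + a"
    if "2 \<le> i" "i + 1 \<le> n" for i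
  proof -
    have "i \<le> n - 1" using that by simp
    then show ?thesis
      using Der[of "E i" "E 1" "E (i + 1)"] n4 that by (simp add: S dE1[simplified] cong: if_cong)
  qed
  have diag: "d (ev (E i)) (E i) = g + of_nat (i - 2) * a" if "2 \<le> i" "i \<le> n" for i
    using that
  proof (induction i rule: nat_induct_at_least)
    case base then show ?case by (simp add: g_def)
  next
    case (Suc m)
    then have "d (ev (E (m + 1))) (E (m + 1)) = d (ev (E m)) (E m) + a" using eic[of m] by simp
    also have "\<dots> = g + of_nat (m - 2) * a + a" using Suc by simp
    also have "\<dots> = g + of_nat (Suc m - 2) * a" using Suc(1)
      by (simp add: Suc_diff_le algebra_simps)
    finally show ?case by simp
  qed
  have offd: "d (ev (E i)) (E j) = (if j = i + 1 then - c else 0)"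
    if "2 \<le> i" "i \<le> n" "2 \<le> j" "j \<le> n" "j \<noteq> i" for i j
  proof (cases "j = i + 1")
    case True
    have "of_nat (i - 1) * d (ev (E i)) (E j) = of_nat (j - 1) * d (ev (E i)) (E j) + c"
      using eib[OF that(1-4)] True that by simp
    moreover have "(of_nat (j - 1) :: complex) = of_nat (i - 1) + 1" using True that by simp
    ultimately have "0 = d (ev (E i)) (E j) + c" by (simp add: algebra_simps)
    then show ?thesis using True by (simp add: eq_neg_iff_add_eq_0 add.commute)
  next
    case False
    have "of_nat (i - 1) * d (ev (E i)) (E j) = of_nat (j - 1) * d (ev (E i)) (E j)"
      using eib[OF that(1-4)] False that by auto
    then have "(of_nat (i - 1) - of_nat (j - 1)) * d (ev (E i)) (E j) = 0"
      by (simp add: algebra_simps)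
    moreover have "(of_nat (i - 1) :: complex) \<noteq> of_nat (j - 1)" using that by simp
    ultimately show ?thesis using False by simp
  qed
  have dEi: "d (ev (E i)) k = (if k = E i then g + of_nat (i - 2) * a
      else if k = E (i + 1) \<and> i + 1 \<le> n then - c else 0)"
    if "2 \<le> i" "i \<le> n" for i k
  proof (cases k)
    case (E j)
    show ?thesis
    proof (cases "1 \<le> j \<and> j \<le> n")
      case False then show ?thesis using outd[of "E i" k] that E by auto
    next
      case True
      then show ?thesis using eia[OF that] diag[OF that] offd[OF that, of j] E that
        by (cases "j = 1"; cases "j = i") auto
    qed
  qed (use eia[OF that] in simp_all)
  have BiF: "D (ev b) H1 = d (ev b) H1 \<and> D (ev b) H2 = d (ev b) H2 \<and> D (ev b) (E 1) = d (ev b) (E 1)"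
    if "b \<in> bas n" for b
  proof -
    have p1: "d (ev b) H1 + d (ev b) H2 = D (ev b) H1 + D (ev b) H2"
      using Bi[of "ev (E 2)" "ev b" "E 2"] n4 that by (simp add: brRF ev_app)
    have p2: "d (ev b) H1 + 2 * d (ev b) H2 = D (ev b) H1 + 2 * D (ev b) H2"
      using Bi[of "ev (E 3)" "ev b" "E 3"] n4 that by (simp add: brRF ev_app)
    have p3: "d (ev b) (E 1) = D (ev b) (E 1)"
      using Bi[of "ev (E 2)" "ev b" "E 3"] n4 that by (simp add: brRF ev_app)
    show ?thesis using lin2'[OF p1 p2] p3 by simp
  qed
  have DA: "D (ev (E 1)) (E (j + 1)) = D (ev H1) (E j)" if "2 \<le> j" "j + 1 \<le> n" for j
    using Ant[of H1 "E 1" "E (j + 1)"] n4 that by (simp add: S cong: if_cong)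
  have DB: "D (ev (E 1)) (E 2) = 0"
    using Ant[of H1 "E 1" "E 2"] n4 by (simp add: S cong: if_cong)
  have DC: "D (ev H2) (E j) = of_nat (j - 1) * D (ev H1) (E j)" if "2 \<le> j" "j \<le> n" for j
    using Ant[of H2 H1 "E j"] n4 that by (simp add: S cong: if_cong)
  have DD: "D (ev (E i)) (E j) = 0" if "2 \<le> i" "i \<le> n" "2 \<le> j" "j \<le> n" for i j
    using Ant[of H1 "E i" "E j"] n4 that by (simp add: S cong: if_cong)
  define x where "x = (\<lambda>k. case k of H1 \<Rightarrow> a - g | H2 \<Rightarrow> - a
     | E j \<Rightarrow> if j = 1 then c else if j = 0 then 0 else D (ev H1) (E j))"
  have xv: "x \<in> vecs n"
    unfolding vecs_def
  proof (intro CollectI allI impI)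
    fix k assume k: "k \<notin> bas n"
    then obtain j where j: "k = E j" "j = 0 \<or> n < j" by (cases k) auto
    then show "x k = 0" using outD[of H1 k] k n4 unfolding x_def by auto
  qed
  have xE: "x (E j) = D (ev H1) (E j)" if "2 \<le> j" for j
    using that unfolding x_def by simp
  have xE1: "x (E 1) = c" "x H1 = a - g" "x H2 = - a" unfolding x_def by simp_all
  have dHH: "d (ev b) H1 = 0 \<and> d (ev b) H2 = 0" if "b \<in> bas n" for b
  proof (cases b)
    case (E i)
    then show ?thesis using that dE1[of H1] dE1[of H2] eia[of i] by (cases "i = 1") auto
  qed (simp_all add: dH1 dH2)
  have dEE: "d (ev b) (E 1) = (if b = H2 then c else if b = E 1 then a else 0)" if "b \<in> bas n" for b
  proof (cases b)
    case (E i)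
    then show ?thesis using that dE1[of "E 1"] eia[of i] by (cases "i = 1") auto
  qed (simp_all add: dH1 dH2)
  show ?thesis
  proof (rule inner_from_basis[OF ld lD xv])
    fix b k assume b: "b \<in> bas n"
    show "d (ev b) k = - br n (RF n) (ev b) x k"
    proof (cases b)
      case H1 then show ?thesis by (simp add: dH1 brRF ev_app split: basis.split)
    next
      case H2 then show ?thesis using xE1 n4 by (simp add: dH2 brRF ev_app split: basis.split)
    next
      case (E i)
      show ?thesis
      proof (cases "i = 1")
        case True
        then show ?thesis using E xE1 n4 by (auto simp add: dE1[simplified] brRF ev_app split: basis.split)
      next
        case False
        then have i: "2 \<le> i" "i \<le> n" using b E by auto
        show ?thesis
        proof (cases k)
          case (E j)
          consider "j = i" | "j = i + 1" | "j \<noteq> i" "j \<noteq> i + 1" by blast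
          then show ?thesis
          proof cases
            case 1
            have "(of_nat (i - 1) :: complex) = of_nat (i - 2) + 1" using i by (simp add: of_nat_diff)
            moreover have "i - Suc 0 \<noteq> i" using i by simp
            ultimately show ?thesis using 1 E \<open>b = E i\<close> i xE1
              by (simp add: dEi brRF ev_app algebra_simps)
          next
            case 2
            then show ?thesis using E \<open>b = E i\<close> i xE1
              by (simp add: dEi brRF ev_app)
          next
            case 3
            then show ?thesis using E \<open>b = E i\<close> i xE1
              by (auto simp add: dEi brRF ev_app)
          qed
        qed (use \<open>b = E i\<close> i in \<open>simp_all add: dEi brRF\<close>)
      qed
    qed
  next
    fix b k assume b: "b \<in> bas n"
    show "D (ev b) k = br n (RF n) x (ev b) k"
    proof (cases k)
      case H1 then show ?thesis using BiF[OF b] dHH[OF b] by (simp add: brRF)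
    next
      case H2 then show ?thesis using BiF[OF b] dHH[OF b] by (simp add: brRF)
    next
      case (E j)
      consider "j = 0" | "j = 1" | "2 \<le> j" "j \<le> n" | "n < j" by linarith
      then show ?thesis
      proof cases
        case 1 then show ?thesis using E outD[OF b, of k] b by (simp add: brRF)
      next
        case 4 then show ?thesis using E outD[OF b, of k] b by (auto simp add: brRF)
      next
        case 2
        have "D (ev b) (E 1) = (if b = H2 then c else if b = E 1 then a else 0)"
          using BiF[OF b] dEE[OF b] by simp
        then show ?thesis using E 2 xE1 n4 by (auto simp: brRF ev_app)
      next
        case 3
        show ?thesis
        proof (cases b)
          case H1 then show ?thesis using E 3 xE[of j] by (simp add: brRF ev_app)
        next
          case H2 then show ?thesis using E 3 xE[of j] DC[OF 3] by (simp add: brRF ev_app)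
        next
          case (E i)
          show ?thesis
          proof (cases "i = 1")
            case True
            show ?thesis
            proof (cases "j = 2")
              case True then show ?thesis using \<open>k = E j\<close> \<open>b = E i\<close> \<open>i = 1\<close> DB
                by (simp add: brRF ev_app)
            next
              case False
              then have "j - 1 + 1 = j" "2 \<le> j - 1" "3 \<le> j" using 3 by auto
              then show ?thesis using \<open>k = E j\<close> \<open>b = E i\<close> \<open>i = 1\<close> DA[of "j - 1"] xE[of "j - 1"] 3
                by (simp add: brRF ev_app)
            qed
          next
            case False
            then have i: "2 \<le> i" "i \<le> n" using b E by auto
            then show ?thesis using \<open>k = E j\<close> \<open>b = E i\<close> DD[OF i 3] 3
              by (simp add: brRF ev_app)
          qed
        qed
      qed
    qed
  qed
qed



lemma L_main:
  assumes n4: "4 \<le> n" and bd: "is_biderivation n (Lgen f n) d D"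
  shows "is_inner_biderivation n (Lgen f n) d D"
proof -
  note P = bider_parts[OF bd]
  have ld: "lin n d" and lD: "lin n D" by (fact P(1), fact P(2))
  note Der = P(3) and Ant = P(4) and Bi = P(5)
  note S = brL[OF n4] lin_scl[OF ld] lin_scl[OF lD] lin_zero[OF ld] lin_zero[OF lD]
     lin_vneg[OF ld] lin_vneg[OF lD] Lgen_def ev_app
  have outd: "\<And>b k. b \<in> bas n \<Longrightarrow> k \<notin> bas n \<Longrightarrow> d (ev b) k = 0"
    using lin_out[OF ld] by simp
  have outD: "\<And>b k. b \<in> bas n \<Longrightarrow> k \<notin> bas n \<Longrightarrow> D (ev b) k = 0"
    using lin_out[OF lD] by simp
  define c where "c = d (ev H2) (E 1)"
  define a where "a = d (ev (E 1)) (E 1)"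
  define g where "g = d (ev (E 2)) (E 2)"
  define e where "e = d (ev H1) (E 2)"
  have h1a: "d (ev H1) H2 = 0"
    using Der[of "E 1" H1 "E 1"] n4 by (simp add: S cong: if_cong)
  have h1b: "d (ev H1) H1 = 0"
    using Der[of "E 2" H1 "E 2"] n4 by (simp add: S cong: if_cong)
  have h1c: "d (ev H1) (E 1) = 0"
    using Der[of H1 H2 "E 1"] n4 by (simp add: S cong: if_cong)
  have h1d: "d (ev H1) (E j) = 0" if "3 \<le> j" "j \<le> n" for j
    using Der[of H1 H2 "E j"] n4 that by (simp add: S cong: if_cong)
  have h1e: "\<not> f \<Longrightarrow> e = 0"
    using Der[of H1 H1 "E 2"] n4 unfolding e_def by (simp add: S cong: if_cong)
  have dH1: "d (ev H1) k = (if k = E 2 then e else 0)" for k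
  proof (cases k)
    case (E j)
    then show ?thesis using h1c h1d[of j] outd[of H1 k] e_def n4
      by (cases "j = 1"; cases "j = 2"; cases "3 \<le> j"; cases "j \<le> n") auto
  qed (simp_all add: h1a h1b)
  have h2a: "d (ev H2) (E j) = 0" if "3 \<le> j" "j \<le> n" for j
    using Der[of H2 H2 "E j"] n4 that by (simp add: S cong: if_cong)
  have h2b: "d (ev H2) (E 2) = 0"
    using Der[of H2 H1 "E 2"] n4 by (simp add: S dH1 cong: if_cong)
  have h2c: "d (ev H2) H1 = 0"
    using Der[of "E 2" H2 "E 2"] n4 by (simp add: S cong: if_cong)
  have h2d: "d (ev H2) H2 = 0"
    using Der[of "E 1" H2 "E 1"] n4 by (simp add: S cong: if_cong)
  have dH2: "d (ev H2) k = (if k = E 1 then c else 0)" for k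
  proof (cases k)
    case (E j)
    then show ?thesis using h2a[of j] h2b outd[of H2 k] c_def n4
      by (cases "j = 1"; cases "j = 2"; cases "3 \<le> j"; cases "j \<le> n") auto
  qed (simp_all add: h2c h2d)
  have e1a: "d (ev (E 1)) H1 = 0" "d (ev (E 1)) H2 = 0"
    using Der[of "E 1" H2 H1] Der[of "E 1" H2 H2] n4 by (simp_all add: S cong: if_cong)
  have e1b: "d (ev (E 1)) (E 2) = 0"
    using Der[of "E 1" H1 "E 2"] n4 by (simp add: S dH1 cong: if_cong)
  have e1c: "d (ev (E 1)) (E 3) = - c"
  proof -
    have "d (ev (E 1)) (E 3) = 2 * d (ev (E 1)) (E 3) + c"
      using Der[of "E 1" H2 "E 3"] n4 by (simp add: S dH2[simplified] cong: if_cong)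
    then show ?thesis by (simp add: algebra_simps eq_neg_iff_add_eq_0)
  qed
  have e1d: "d (ev (E 1)) (E j) = 0" if "4 \<le> j" "j \<le> n" for j
  proof -
    have ne: "j - Suc 0 \<noteq> Suc 0" using that by simp
    have "d (ev (E 1)) (E j) = of_nat (j - 1) * d (ev (E 1)) (E j)"
      using Der[of "E 1" H2 "E j"] n4 that ne by (simp add: S dH2[simplified] cong: if_cong)
    then have "(of_nat (j - 1) - 1) * d (ev (E 1)) (E j) = 0" by (simp add: algebra_simps)
    moreover have "(of_nat (j - 1) :: complex) \<noteq> of_nat 1" using that by (simp only: of_nat_eq_iff)
    ultimately show ?thesis by (metis mult_eq_0_iff of_nat_1 right_minus_eq)
  qed
  have dE1: "d (ev (E 1)) k = (if k = E 1 then a else if k = E 3 then - c else 0)" for k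
  proof (cases k)
    case (E j)
    then show ?thesis using e1b e1c e1d[of j] outd[of "E 1" k] a_def n4
      by (cases "j = 1"; cases "j = 2"; cases "j = 3"; cases "4 \<le> j"; cases "j \<le> n") auto
  qed (use e1a in simp_all)
  have dE2: "d (ev (E 2)) k = (if k = E 2 then g else 0)" for k
  proof (cases "k = E 2")
    case True then show ?thesis using g_def by simp
  next
    case False
    have "d (ev (E 2)) k = br n (Lgen f n) (d (ev (E 2))) (ev H1) k + br n (Lgen f n) (ev (E 2)) (d (ev H1)) k"
      using Der[of "E 2" H1 k] n4 by (simp add: Lgen_def)
    then show ?thesis using False by (simp add: S dH1 split: basis.split)
  qed
  have eia: "d (ev (E i)) H1 = 0" "d (ev (E i)) H2 = 0" "d (ev (E i)) (E 2) = 0"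
    if "3 \<le> i" "i \<le> n" for i
    using Der[of "E i" H2 H1] Der[of "E i" H2 H2] Der[of "E i" H2 "E 2"] n4 that
    by (simp_all add: S dH2 cong: if_cong)
  have eia1: "d (ev (E i)) (E 1) = 0" if "3 \<le> i" "i \<le> n" for i
  proof -
    have "of_nat (i - 1) * d (ev (E i)) (E 1) = d (ev (E i)) (E 1)"
      using Der[of "E i" H2 "E 1"] n4 that by (simp add: S dH2 cong: if_cong)
    then have "(of_nat (i - 1) - 1) * d (ev (E i)) (E 1) = 0" by (simp add: algebra_simps)
    moreover have "(of_nat (i - 1) :: complex) \<noteq> of_nat 1" using that by (simp only: of_nat_eq_iff)
    ultimately show ?thesis by (metis mult_eq_0_iff of_nat_1 right_minus_eq)
  qed
  have eib: "of_nat (i - 1) * d (ev (E i)) (E j) = of_nat (j - 1) * d (ev (E i)) (E j)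
      + (if i = j - 1 then c else 0)"
    if "3 \<le> i" "i \<le> n" "3 \<le> j" "j \<le> n" for i j
  proof -
    have "E 1 \<noteq> E i" "E (j - 1) \<noteq> E 1" "E j \<noteq> E 1" "\<not> 4 \<le> j \<longrightarrow> i \<noteq> j - Suc 0" using that by auto
    then show ?thesis
      using Der[of "E i" H2 "E j"] n4 that by (simp add: S dH2 cong: if_cong)
  qed
  have eic: "d (ev (E (i + 1))) (E (i + 1)) = d (ev (E i)) (E i) + a"
    if "3 \<le> i" "i + 1 \<le> n" for i
  proof -
    have "i \<le> n - 1" using that by simp
    then show ?thesis
      using Der[of "E i" "E 1" "E (i + 1)"] n4 that by (simp add: S dE1[simplified] cong: if_cong)
  qed
  have e33: "d (ev (E 3)) (E 3) = 2 * a"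
    using Der[of "E 1" "E 1" "E 3"] n4 by (simp add: S dE1[simplified] cong: if_cong)
  have diag: "d (ev (E i)) (E i) = of_nat (i - 1) * a" if "3 \<le> i" "i \<le> n" for i
    using that
  proof (induction i rule: nat_induct_at_least)
    case base then show ?case using e33 by simp
  next
    case (Suc m)
    then have "d (ev (E (m + 1))) (E (m + 1)) = d (ev (E m)) (E m) + a" using eic[of m] by simp
    also have "\<dots> = of_nat (m - 1) * a + a" using Suc by simp
    also have "\<dots> = of_nat (Suc m - 1) * a" using Suc(1)
      by (simp add: algebra_simps of_nat_diff)
    finally show ?case by simp
  qed
  have offd: "d (ev (E i)) (E j) = (if j = i + 1 then - c else 0)"
    if "3 \<le> i" "i \<le> n" "3 \<le> j" "j \<le> n" "j \<noteq> i" for i j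
  proof (cases "j = i + 1")
    case True
    have "of_nat (i - 1) * d (ev (E i)) (E j) = of_nat (j - 1) * d (ev (E i)) (E j) + c"
      using eib[OF that(1-4)] True that by simp
    moreover have "(of_nat (j - 1) :: complex) = of_nat (i - 1) + 1" using True that by simp
    ultimately have "0 = d (ev (E i)) (E j) + c" by (simp add: algebra_simps)
    then show ?thesis using True by (simp add: eq_neg_iff_add_eq_0 add.commute)
  next
    case False
    have "of_nat (i - 1) * d (ev (E i)) (E j) = of_nat (j - 1) * d (ev (E i)) (E j)"
      using eib[OF that(1-4)] False that by auto
    then have "(of_nat (i - 1) - of_nat (j - 1)) * d (ev (E i)) (E j) = 0"
      by (simp add: algebra_simps)
    moreover have "(of_nat (i - 1) :: complex) \<noteq> of_nat (j - 1)" using that by simp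
    ultimately show ?thesis using False by simp
  qed
  have dEi: "d (ev (E i)) k = (if k = E i then of_nat (i - 1) * a
      else if k = E (i + 1) \<and> i + 1 \<le> n then - c else 0)"
    if "3 \<le> i" "i \<le> n" for i k
  proof (cases k)
    case (E j)
    show ?thesis
    proof (cases "1 \<le> j \<and> j \<le> n")
      case False then show ?thesis using outd[of "E i" k] that E by auto
    next
      case True
      then show ?thesis using eia[OF that] eia1[OF that] diag[OF that] offd[OF that, of j] E that
        by (cases "j = 1"; cases "j = 2"; cases "j = i") auto
    qed
  qed (use eia[OF that] in simp_all)
  have BiF: "D (ev b) H1 = d (ev b) H1 \<and> D (ev b) H2 = d (ev b) H2 \<and> D (ev b) (E 1) = d (ev b) (E 1)"
    if "b \<in> bas n" for b
  proof -
    have p1: "d (ev b) H2 = D (ev b) H2"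
      using Bi[of "ev (E 1)" "ev b" "E 1"] n4 that by (simp add: brL[OF n4] ev_app)
    have p2: "d (ev b) (E 1) = D (ev b) (E 1)"
      using Bi[of "ev (E 1)" "ev b" "E 3"] n4 that by (simp add: brL[OF n4] ev_app)
    have p3: "d (ev b) H1 = D (ev b) H1"
      using Bi[of "ev (E 2)" "ev b" "E 2"] n4 that by (simp add: brL[OF n4] ev_app cong: if_cong)
    show ?thesis using p1 p2 p3 by simp
  qed
  have BiF2: "D (ev b) (E 2) = d (ev b) (E 2)" if "b \<in> bas n" "f" for b
    using Bi[of "ev H1" "ev b" "E 2"] n4 that by (simp add: brL[OF n4] ev_app)
  have DH1a: "D (ev H1) (E j) = 0" if "3 \<le> j" "j \<le> n" for j
    using Ant[of H1 H2 "E j"] n4 that by (simp add: S cong: if_cong)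
  have DH2b: "D (ev H2) (E 2) = 0"
    using Ant[of H1 H2 "E 2"] n4 by (simp add: S cong: if_cong)
  have DE1a: "D (ev (E 1)) (E 2) = 0"
    using Ant[of H2 "E 1" "E 2"] n4 by (simp add: S cong: if_cong)
  have DE1b: "D (ev (E 1)) (E 3) = D (ev H2) (E 1)"
  proof -
    have "- D (ev (E 1)) (E 3) = D (ev H2) (E 1) - 2 * D (ev (E 1)) (E 3)"
      using Ant[of H2 "E 1" "E 3"] n4 by (simp add: S cong: if_cong)
    then show ?thesis by (simp add: algebra_simps)
  qed
  have DE1c: "of_nat (j - 2) * D (ev (E 1)) (E j) = D (ev H2) (E (j - 1))" if "4 \<le> j" "j \<le> n" for j
  proof -
    have "- D (ev (E 1)) (E j) = D (ev H2) (E (j - 1)) - of_nat (j - 1) * D (ev (E 1)) (E j)"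
      using Ant[of H2 "E 1" "E j"] n4 that by (simp add: S cong: if_cong)
    moreover have "(of_nat (j - 1) :: complex) = of_nat (j - 2) + 1" using that by simp
    ultimately show ?thesis by (simp add: algebra_simps)
  qed
  have DE2a: "D (ev (E 2)) (E 2) = 0" if "\<not> f"
    using Ant[of H1 "E 2" "E 2"] n4 that by (simp add: S cong: if_cong)
  have DE2b: "D (ev (E 2)) (E j) = 0" if "3 \<le> j" "j \<le> n" for j
    using Ant[of "E 2" H2 "E j"] n4 that by (simp add: S cong: if_cong)
  have DEia: "D (ev (E i)) (E 2) = 0" if "3 \<le> i" "i \<le> n" for i
    using Ant[of "E i" H1 "E 2"] n4 that by (simp add: S cong: if_cong)
  have DEib: "D (ev (E i)) (E j) = 0" if "3 \<le> i" "i \<le> n" "3 \<le> j" "j \<le> n" for i j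
    using Ant[of H2 "E i" "E j"] n4 that by (simp add: S cong: if_cong)
  define x where "x = (\<lambda>k. case k of H1 \<Rightarrow> - g | H2 \<Rightarrow> - a
     | E j \<Rightarrow> if j = 0 then 0 else if j = 1 then c else if j = 2 then D (ev H1) (E 2)
              else D (ev H2) (E j) / of_nat (j - 1))"
  have xv: "x \<in> vecs n"
    unfolding vecs_def
  proof (intro CollectI allI impI)
    fix k assume k: "k \<notin> bas n"
    then obtain j where j: "k = E j" "j = 0 \<or> n < j" by (cases k) auto
    then show "x k = 0" using outD[of H2 k] k n4 unfolding x_def by auto
  qed
  have xE: "x (E j) = D (ev H2) (E j) / of_nat (j - 1)" if "3 \<le> j" for j
    using that unfolding x_def by simp
  have xE1: "x (E 1) = c" "x (E 2) = D (ev H1) (E 2)" "x H1 = - g" "x H2 = - a"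
    unfolding x_def by simp_all
  have eX: "e = (if f then x (E 2) else 0)"
    using h1e BiF2[of H1] xE1(2) e_def by (cases f) simp_all
  have dHH: "d (ev b) H1 = 0 \<and> d (ev b) H2 = 0" if "b \<in> bas n" for b
  proof (cases b)
    case (E i)
    then show ?thesis using that dE1[of H1] dE1[of H2] dE2[of H1] dE2[of H2] eia[of i]
      by (cases "i = 1"; cases "i = 2") auto
  qed (simp_all add: dH1 dH2)
  have dEE: "d (ev b) (E 1) = (if b = H2 then c else if b = E 1 then a else 0)" if "b \<in> bas n" for b
  proof (cases b)
    case (E i)
    then show ?thesis using that dE1[of "E 1"] dE2[of "E 1"] eia1[of i] by (cases "i = 1"; cases "i = 2") auto
  qed (simp_all add: dH1 dH2)
  have brS: "br n (Lgen f n) = br n (Lgen f n)" ..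
  show ?thesis
  proof (rule inner_from_basis[OF ld lD xv])
    fix b k assume b: "b \<in> bas n"
    show "d (ev b) k = - br n (Lgen f n) (ev b) x k"
    proof (cases b)
      case H1 then show ?thesis using eX by (simp add: dH1 brL[OF n4] ev_app split: basis.split)
    next
      case H2 then show ?thesis using xE1 n4 by (simp add: dH2 brL[OF n4] ev_app split: basis.split)
    next
      case (E i)
      consider "i = 1" | "i = 2" | "3 \<le> i" "i \<le> n" using b E by force
      then show ?thesis
      proof cases
        case 1
        then show ?thesis using E xE1 n4 by (auto simp add: dE1[simplified] brL[OF n4] ev_app split: basis.split)
      next
        case 2
        then show ?thesis using E xE1 n4 by (auto simp add: dE2 brL[OF n4] ev_app split: basis.split)
      next
        case 3
        then have i: "3 \<le> i" "i \<le> n" by auto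
        show ?thesis
        proof (cases k)
          case (E j)
          consider "j = i" | "j = i + 1" | "j \<noteq> i" "j \<noteq> i + 1" by blast
          then show ?thesis
          proof cases
            case 1
            moreover have "i - Suc 0 \<noteq> i" using i by simp
            ultimately show ?thesis using 1 E \<open>b = E i\<close> i xE1
              by (simp add: dEi brL[OF n4] ev_app algebra_simps)
          next
            case 2
            then show ?thesis using E \<open>b = E i\<close> i xE1
              by (simp add: dEi brL[OF n4] ev_app)
          next
            case 3
            then show ?thesis using E \<open>b = E i\<close> i xE1
              by (auto simp add: dEi brL[OF n4] ev_app)
          qed
        qed (use \<open>b = E i\<close> i in \<open>simp_all add: dEi brL[OF n4]\<close>)
      qed
    qed
  next
    fix b k assume b: "b \<in> bas n"
    show "D (ev b) k = br n (Lgen f n) x (ev b) k"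
    proof (cases k)
      case H1 then show ?thesis using BiF[OF b] dHH[OF b] by (simp add: brL[OF n4])
    next
      case H2 then show ?thesis using BiF[OF b] dHH[OF b] by (simp add: brL[OF n4])
    next
      case (E j)
      consider "j = 0" | "j = 1" | "j = 2" | "3 \<le> j" "j \<le> n" | "n < j" using n4 by linarith
      then show ?thesis
      proof cases
        case 1 then show ?thesis using E outD[OF b, of k] b by (simp add: brL[OF n4])
      next
        case 5 then show ?thesis using E outD[OF b, of k] b n4 by (auto simp add: brL[OF n4])
      next
        case 2
        have "D (ev b) (E 1) = (if b = H2 then c else if b = E 1 then a else 0)"
          using BiF[OF b] dEE[OF b] by simp
        then show ?thesis using E 2 xE1 n4 by (auto simp: brL[OF n4] ev_app)
      next
        case 3
        show ?thesis
        proof (cases b)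
          case H1 then show ?thesis using E 3 xE1 by (simp add: brL[OF n4] ev_app)
        next
          case H2 then show ?thesis using E 3 xE1 DH2b by (simp add: brL[OF n4] ev_app)
        next
          case (E i)
          consider "i = 1" | "i = 2" | "3 \<le> i" "i \<le> n" using b E by force
          then show ?thesis
          proof cases
            case 1 then show ?thesis using \<open>k = E j\<close> \<open>b = E i\<close> 3 DE1a by (simp add: brL[OF n4] ev_app)
          next
            case 2
            show ?thesis
            proof (cases f)
              case True
              then show ?thesis using \<open>k = E j\<close> \<open>b = E i\<close> 2 3 BiF2[OF b] dE2 xE1
                by (simp add: brL[OF n4] ev_app)
            next
              case False
              then show ?thesis using \<open>k = E j\<close> \<open>b = E i\<close> 2 3 DE2a
                by (simp add: brL[OF n4] ev_app)
            qed
          next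
            case 3
            then show ?thesis using \<open>k = E j\<close> \<open>b = E i\<close> DEia[of i] \<open>j = 2\<close>
              by (simp add: brL[OF n4] ev_app)
          qed
        qed
      next
        case 4
        show ?thesis
        proof (cases b)
          case H1 then show ?thesis using E 4 DH1a[OF 4] by (simp add: brL[OF n4] ev_app)
        next
          case H2
          have "(of_nat (j - 1) :: complex) \<noteq> 0" using 4 by simp
          then show ?thesis using E 4 H2 xE[of j] by (simp add: brL[OF n4] ev_app)
        next
          case (E i)
          consider "i = 1" | "i = 2" | "3 \<le> i" "i \<le> n" using b E by force
          then show ?thesis
          proof cases
            case 1
            show ?thesis
            proof (cases "j = 3")
              case True
              then show ?thesis using \<open>k = E j\<close> \<open>b = E i\<close> 1 DE1b BiF[of H2] dH2 xE1
                by (simp add: brL[OF n4] ev_app)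
            next
              case False
              then have j4: "4 \<le> j" "3 \<le> j - 1" "j - 1 - 1 = j - 2" "j - Suc 0 \<noteq> Suc 0" using 4 by auto
              have nz: "(of_nat (j - 2) :: complex) \<noteq> 0" unfolding of_nat_eq_0_iff using j4 by simp
              have "D (ev (E 1)) (E j) = D (ev H2) (E (j - 1)) / of_nat (j - 2)"
                using DE1c[OF j4(1) 4(2)] nz by (metis nonzero_mult_div_cancel_left)
              then show ?thesis using \<open>k = E j\<close> \<open>b = E i\<close> 1 xE[OF j4(2)] j4 4
                by (simp add: brL[OF n4] ev_app)
            qed
          next
            case 2
            then show ?thesis using \<open>k = E j\<close> \<open>b = E i\<close> DE2b[OF 4] 4 by (simp add: brL[OF n4] ev_app)
          next
            case 3
            then show ?thesis using \<open>k = E j\<close> \<open>b = E i\<close> DEib[OF 3 4] 4 by (simp add: brL[OF n4] ev_app)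
          qed
        qed
      qed
    qed
  qed
qed


theorem mainTheorem14:
  fixes n :: nat and s :: "basis \<Rightarrow> basis \<Rightarrow> basis \<Rightarrow> complex"
    and d D :: "(basis \<Rightarrow> complex) \<Rightarrow> basis \<Rightarrow> complex"
  assumes "n \<ge> 4"
    and "s \<in> {RF n, L1 n, L2 n}"
    and "is_biderivation n s d D"
  shows "is_inner_biderivation n s d D"
proof -
  have "s = RF n \<or> s = Lgen True n \<or> s = Lgen False n"
    using assms(2) by (auto simp: L1_def L2_def)
  then show ?thesis
    using RF_main[OF assms(1)] L_main[OF assms(1)] assms(3) by blast
qed

end
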